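(* Let $D_{C_3}$ be a weighted oriented graph whose underlying graph is the $3$-cycle $C_3$. Then $I(D_{C_3})$ is Cohen-Macaulay if and only if there exists a vertex $x$ of $D_{C_3}$ with $w(x)=1$.
   Context: A weighted oriented graph $D$ with underlying simple graph on vertices $x_1,\ldots,x_n$ is an orientation of its edges with a weight function $w:V\to\mathbb{Z}_{>0}$; an edge oriented from $x_i$ to $x_j$ is written $(x_i,x_j)$. By convention, a source (a vertex all of whose edges are oriented away from it) is assigned weight $1$. The edge ideal is $I(D)=\langle x_ix_j^{w(x_j)}:(x_i,x_j)\in E(D)\rangle\subseteq A=K[x_1,\ldots,x_n]$, $K$ a field; $I(D)$ is Cohen-Macaulay if $A/I(D)$ is Cohen-Macaulay. *)

theory Defs
  imports Main "HOL-Library.Cardinality" "HOL-Library.Poly_Mapping" "HOL-Library.Extended_Nat"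
begin

definition is_ideal :: "'a::comm_ring_1 set \<Rightarrow> bool" where
  "is_ideal J \<longleftrightarrow> 0 \<in> J \<and> (\<forall>a\<in>J. \<forall>b\<in>J. a + b \<in> J) \<and> (\<forall>a\<in>J. \<forall>r. r * a \<in> J)"

definition ideal_gen :: "'a::comm_ring_1 set \<Rightarrow> 'a set" where
  "ideal_gen S = \<Inter>{J. is_ideal J \<and> S \<subseteq> J}"

definition prime_ideal :: "'a::comm_ring_1 set \<Rightarrow> bool" where
  "prime_ideal P \<longleftrightarrow> is_ideal P \<and> P \<noteq> UNIV \<and> (\<forall>a b. a * b \<in> P \<longrightarrow> a \<in> P \<or> b \<in> P)"

definition maximal_ideal :: "'a::comm_ring_1 set \<Rightarrow> bool" where
  "maximal_ideal M \<longleftrightarrow> is_ideal M \<and> M \<noteq> UNIV \<and>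
     (\<forall>J. is_ideal J \<and> M \<subseteq> J \<longrightarrow> J = M \<or> J = UNIV)"

section \<open>Notions for the quotient ring R = A/I, expressed via ideals of A containing I\<close>

definition quot_height :: "'a::comm_ring_1 set \<Rightarrow> 'a set \<Rightarrow> enat" where
  "quot_height I P = Sup {enat n | n. \<exists>C :: nat \<Rightarrow> 'a set.
       (\<forall>i\<le>n. prime_ideal (C i) \<and> I \<subseteq> C i) \<and> (\<forall>i<n. C i \<subset> C (Suc i)) \<and> C n = P}"

definition quot_regular_seq :: "'a::comm_ring_1 set \<Rightarrow> 'a list \<Rightarrow> bool" where
  "quot_regular_seq I fs \<longleftrightarrow>
     (\<forall>k < length fs. \<forall>g. g * fs ! k \<in> ideal_gen (I \<union> set (take k fs))
                         \<longrightarrow> g \<in> ideal_gen (I \<union> set (take k fs)))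
     \<and> ideal_gen (I \<union> set fs) \<noteq> UNIV"

text \<open>Grade of the ideal J/I on A/I (= depth of the localisation of A/I at J/I when
  J is maximal): supremum of lengths of (A/I)-regular sequences inside J/I.\<close>
definition quot_grade :: "'a::comm_ring_1 set \<Rightarrow> 'a set \<Rightarrow> enat" where
  "quot_grade I J = Sup {enat (length fs) | fs. set fs \<subseteq> J \<and> quot_regular_seq I fs}"

text \<open>A/I is Cohen-Macaulay: for every maximal ideal m of A/I, depth (A/I)_m = dim (A/I)_m.\<close>
definition cohen_macaulay_quot :: "'a::comm_ring_1 set \<Rightarrow> bool" where
  "cohen_macaulay_quot I \<longleftrightarrow>
     (\<forall>M. maximal_ideal M \<and> I \<subseteq> M \<longrightarrow> quot_grade I M = quot_height I M)"

type_synonym ('v, 'k) mpoly = "('v \<Rightarrow>\<^sub>0 nat) \<Rightarrow>\<^sub>0 'k"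

definition Var :: "'v \<Rightarrow> ('v, 'k::comm_ring_1) mpoly" where
  "Var v = Poly_Mapping.single (Poly_Mapping.single v 1) 1"

definition edge_ideal :: "('v \<times> 'v) set \<Rightarrow> ('v \<Rightarrow> nat) \<Rightarrow> ('v, 'k::comm_ring_1) mpoly set" where
  "edge_ideal E w = ideal_gen {Var i * Var j ^ w j | i j. (i, j) \<in> E}"

definition is_orientation :: "('v \<Rightarrow> 'v \<Rightarrow> bool) \<Rightarrow> ('v \<times> 'v) set \<Rightarrow> bool" where
  "is_orientation G E \<longleftrightarrow> (\<forall>x y. (x, y) \<in> E \<longrightarrow> G x y) \<and>
     (\<forall>x y. G x y \<longrightarrow> ((x, y) \<in> E \<longleftrightarrow> (y, x) \<notin> E))"

definition is_source :: "('v \<Rightarrow> 'v \<Rightarrow> bool) \<Rightarrow> ('v \<times> 'v) set \<Rightarrow> 'v \<Rightarrow> bool" where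
  "is_source G E x \<longleftrightarrow> (\<forall>y. G x y \<longrightarrow> (x, y) \<in> E)"

text \<open>The 3-cycle C_3 on a 3-element vertex type: every two distinct vertices are adjacent.\<close>
definition C3_graph :: "'v \<Rightarrow> 'v \<Rightarrow> bool" where
  "C3_graph x y \<longleftrightarrow> x \<noteq> y"

end

theory Submission
  imports Defs "HOL-Computational_Algebra.Polynomial"
begin

lemma ideal_gen_ideal: "is_ideal (ideal_gen S)"
  unfolding is_ideal_def ideal_gen_def by auto

lemma ideal_gen_sub: "S \<subseteq> ideal_gen S"
  unfolding ideal_gen_def by auto

lemma ideal_gen_least: "is_ideal J \<Longrightarrow> S \<subseteq> J \<Longrightarrow> ideal_gen S \<subseteq> J"
  unfolding ideal_gen_def by auto

lemma ideal_gen_idem: "is_ideal J \<Longrightarrow> ideal_gen J = J"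
  using ideal_gen_least ideal_gen_sub by blast

lemma ideal_gen_mono: "S \<subseteq> T \<Longrightarrow> ideal_gen S \<subseteq> ideal_gen T"
  by (meson ideal_gen_ideal ideal_gen_least ideal_gen_sub order_trans)

lemma ideal_0: "is_ideal J \<Longrightarrow> 0 \<in> J" unfolding is_ideal_def by auto
lemma ideal_add: "is_ideal J \<Longrightarrow> a \<in> J \<Longrightarrow> b \<in> J \<Longrightarrow> a + b \<in> J" unfolding is_ideal_def by auto
lemma ideal_mult: "is_ideal J \<Longrightarrow> a \<in> J \<Longrightarrow> r * a \<in> J" unfolding is_ideal_def by auto
lemma ideal_mult2: "is_ideal J \<Longrightarrow> a \<in> J \<Longrightarrow> a * r \<in> J" unfolding is_ideal_def by (auto simp: mult.commute)
lemma ideal_uminus: "is_ideal J \<Longrightarrow> a \<in> J \<Longrightarrow> - a \<in> J"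
  using ideal_mult[of J a "-1"] by simp
lemma ideal_diff: "is_ideal J \<Longrightarrow> a \<in> J \<Longrightarrow> b \<in> J \<Longrightarrow> a - b \<in> J"
  using ideal_add[of J a "-b"] ideal_uminus by auto
lemma ideal_one: "is_ideal J \<Longrightarrow> 1 \<in> J \<Longrightarrow> J = UNIV"
  using ideal_mult[of J 1] by auto
lemma ideal_sum: assumes "is_ideal J" "finite A" "\<And>x. x \<in> A \<Longrightarrow> f x \<in> J" shows "sum f A \<in> J"
  using assms(2,3) by (induction A rule: finite_induct) (auto intro: ideal_0[OF assms(1)] ideal_add[OF assms(1)])
lemma ideal_pow: "is_ideal J \<Longrightarrow> a \<in> J \<Longrightarrow> n > 0 \<Longrightarrow> a ^ n \<in> J"
  by (cases n) (auto intro: ideal_mult2)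

lemma prime_not_one: "prime_ideal P \<Longrightarrow> 1 \<notin> P"
  unfolding prime_ideal_def using ideal_one by blast

lemma prime_pow: "prime_ideal P \<Longrightarrow> a ^ n \<in> P \<Longrightarrow> a \<in> P"
  by (induction n) (auto simp: prime_ideal_def prime_not_one)

lemma maximal_prime:
  assumes "maximal_ideal M" shows "prime_ideal M"
proof -
  have iM: "is_ideal M" and nU: "M \<noteq> UNIV" using assms unfolding maximal_ideal_def by auto
  have "a \<in> M \<or> b \<in> M" if ab: "a * b \<in> M" for a b
  proof (rule ccontr)
    assume nn: "\<not> (a \<in> M \<or> b \<in> M)"
    define J where "J = {m + r * a | m r. m \<in> M}"
    have "is_ideal J" unfolding is_ideal_def J_def
    proof (intro conjI ballI allI)
      show "0 \<in> {m + r * a |m r. m \<in> M}" using ideal_0[OF iM] by (intro CollectI exI[of _ 0]) auto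
    next
      fix x y assume "x \<in> {m + r * a |m r. m \<in> M}" "y \<in> {m + r * a |m r. m \<in> M}"
      then obtain m1 r1 m2 r2 where "x = m1 + r1 * a" "y = m2 + r2 * a" "m1 \<in> M" "m2 \<in> M" by auto
      then show "x + y \<in> {m + r * a |m r. m \<in> M}"
        by (intro CollectI exI[of _ "m1 + m2"] exI[of _ "r1 + r2"]) (auto simp: algebra_simps ideal_add[OF iM])
    next
      fix x s assume "x \<in> {m + r * a |m r. m \<in> M}"
      then obtain m1 r1 where "x = m1 + r1 * a" "m1 \<in> M" by auto
      then have "s * x = s * m1 + (s * r1) * a" "s * m1 \<in> M" using ideal_mult[OF iM] by (auto simp: algebra_simps)
      then show "s * x \<in> {m + r * a |m r. m \<in> M}" by blast
    qed
    moreover have "M \<subseteq> J" unfolding J_def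
    proof
      fix x assume "x \<in> M" then have "x = x + 0 * a \<and> x \<in> M" by simp
      then show "x \<in> {m + r * a |m r. m \<in> M}" by blast
    qed
    moreover have "a = 0 + 1 * a \<and> 0 \<in> M" using ideal_0[OF iM] by simp
    then have "a \<in> J" unfolding J_def by blast
    ultimately have "J = UNIV" using assms nn unfolding maximal_ideal_def by blast
    then obtain m r where "1 = m + r * a" "m \<in> M" unfolding J_def by blast
    then have "b = m * b + r * (a * b)" by (metis mult.assoc mult.commute mult_1 distrib_right)
    moreover have "m * b + r * (a * b) \<in> M" using ideal_mult2[OF iM \<open>m \<in> M\<close>] ideal_mult[OF iM ab] iM by (intro ideal_add) auto
    ultimately show False using nn by auto
  qed
  then show ?thesis using iM nU unfolding prime_ideal_def by blast
qed

lemma prime_avoid: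
  fixes J S :: "'a::comm_ring_1 set"
  assumes J: "is_ideal J" and S1: "1 \<in> S" and Smul: "\<And>x y. x \<in> S \<Longrightarrow> y \<in> S \<Longrightarrow> x * y \<in> S"
    and disj: "J \<inter> S = {}"
  shows "\<exists>P. prime_ideal P \<and> J \<subseteq> P \<and> P \<inter> S = {}"
proof -
  define A where "A = {K. is_ideal K \<and> J \<subseteq> K \<and> K \<inter> S = {}}"
  have "\<exists>U\<in>A. \<forall>X\<in>C. X \<subseteq> U" if C: "C \<in> chains A" for C
  proof (cases "C = {}")
    case True then show ?thesis using J disj unfolding A_def by auto
  next
    case False
    have CA: "C \<subseteq> A" using C chainsD2 by blast
    have "\<Union>C \<in> A" unfolding A_def
    proof (intro CollectI conjI)
      show "is_ideal (\<Union>C)" unfolding is_ideal_def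
      proof (intro conjI ballI allI)
        show "0 \<in> \<Union>C" using False CA unfolding A_def by (auto intro: ideal_0)
      next
        fix x y assume "x \<in> \<Union>C" "y \<in> \<Union>C"
        then obtain X Y where "X \<in> C" "Y \<in> C" "x \<in> X" "y \<in> Y" by auto
        with chainsD[OF C] have "x \<in> X \<and> y \<in> X \<or> x \<in> Y \<and> y \<in> Y" by blast
        then show "x + y \<in> \<Union>C" using CA \<open>X \<in> C\<close> \<open>Y \<in> C\<close> unfolding A_def by (auto intro: ideal_add)
      next
        fix x r assume "x \<in> \<Union>C"
        then show "r * x \<in> \<Union>C" using CA unfolding A_def by (auto intro: ideal_mult)
      qed
      show "J \<subseteq> \<Union>C" using False CA unfolding A_def by auto
      show "\<Union>C \<inter> S = {}" using CA unfolding A_def by auto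
    qed
    then show ?thesis by auto
  qed
  then obtain P where PA: "P \<in> A" and Pmax: "\<forall>X\<in>A. P \<subseteq> X \<longrightarrow> X = P"
    using Zorn_Lemma2[of A] by blast
  have iP: "is_ideal P" and JP: "J \<subseteq> P" and PS: "P \<inter> S = {}" using PA unfolding A_def by auto
  have ext: "\<exists>s\<in>S. \<exists>m\<in>P. \<exists>r. s = m + r * a" if "a \<notin> P" for a
  proof (rule ccontr)
    assume nex: "\<not> ?thesis"
    define K where "K = {m + r * a | m r. m \<in> P}"
    have "is_ideal K" unfolding is_ideal_def K_def
    proof (intro conjI ballI allI)
      show "0 \<in> {m + r * a |m r. m \<in> P}" using ideal_0[OF iP] by (intro CollectI exI[of _ 0]) auto
    next
      fix x y assume "x \<in> {m + r * a |m r. m \<in> P}" "y \<in> {m + r * a |m r. m \<in> P}"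
      then obtain m1 r1 m2 r2 where "x = m1 + r1 * a" "y = m2 + r2 * a" "m1 \<in> P" "m2 \<in> P" by auto
      then show "x + y \<in> {m + r * a |m r. m \<in> P}"
        by (intro CollectI exI[of _ "m1 + m2"] exI[of _ "r1 + r2"]) (auto simp: algebra_simps ideal_add[OF iP])
    next
      fix x s assume "x \<in> {m + r * a |m r. m \<in> P}"
      then obtain m1 r1 where "x = m1 + r1 * a" "m1 \<in> P" by auto
      then have "s * x = s * m1 + (s * r1) * a" "s * m1 \<in> P" using ideal_mult[OF iP] by (auto simp: algebra_simps)
      then show "s * x \<in> {m + r * a |m r. m \<in> P}" by blast
    qed
    moreover have "P \<subseteq> K" unfolding K_def
    proof
      fix x assume "x \<in> P" then have "x = x + 0 * a \<and> x \<in> P" by simp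
      then show "x \<in> {m + r * a |m r. m \<in> P}" by blast
    qed
    moreover have "a = 0 + 1 * a \<and> 0 \<in> P" using ideal_0[OF iP] by simp
    then have "a \<in> K" unfolding K_def by blast
    moreover have "K \<inter> S = {}" using nex unfolding K_def by blast
    ultimately have "K \<in> A" "P \<subseteq> K" "K \<noteq> P" using JP that unfolding A_def by auto
    then show False using Pmax by blast
  qed
  have "prime_ideal P" unfolding prime_ideal_def
  proof (intro conjI allI impI)
    show "is_ideal P" by fact
    show "P \<noteq> UNIV" using S1 PS by auto
  next
    fix a b assume ab: "a * b \<in> P"
    show "a \<in> P \<or> b \<in> P"
    proof (rule ccontr)
      assume "\<not> (a \<in> P \<or> b \<in> P)"
      then obtain s1 m1 r1 s2 m2 r2 where s: "s1 \<in> S" "m1 \<in> P" "s1 = m1 + r1 * a"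
        "s2 \<in> S" "m2 \<in> P" "s2 = m2 + r2 * b" using ext by meson
      have "s1 * s2 = m1 * s2 + (r1 * a) * m2 + (r1 * r2) * (a * b)"
        using s by (simp add: algebra_simps)
      also have "\<dots> \<in> P" using s ab iP ideal_mult2[OF iP \<open>m1 \<in> P\<close>] ideal_mult[OF iP \<open>m2 \<in> P\<close>]
          ideal_mult[OF iP ab] by (intro ideal_add) auto
      finally show False using Smul[OF s(1) s(4)] PS by auto
    qed
  qed
  then show ?thesis using JP PS by blast
qed

lemma smaller_prime:
  fixes J Q :: "'a::comm_ring_1 set"
  assumes J: "is_ideal J" and Q: "prime_ideal Q" and JQ: "J \<subseteq> Q" and xQ: "x \<in> Q"
    and reg: "\<And>g. g * x \<in> J \<Longrightarrow> g \<in> J"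
  shows "\<exists>Q0. prime_ideal Q0 \<and> J \<subseteq> Q0 \<and> Q0 \<subset> Q"
proof -
  define S where "S = {s * x ^ n | s n. s \<notin> Q}"
  have "1 = 1 * x ^ 0 \<and> 1 \<notin> Q" using prime_not_one[OF Q] by simp
  then have S1: "1 \<in> S" unfolding S_def by blast
  have Smul: "u * v \<in> S" if "u \<in> S" "v \<in> S" for u v
  proof -
    have "u \<in> {s * x ^ n | s n. s \<notin> Q}" using that(1) S_def by simp
    then obtain s1 n1 where "u = s1 * x ^ n1" "s1 \<notin> Q" by blast
    have "v \<in> {s * x ^ n | s n. s \<notin> Q}" using that(2) S_def by simp
    then obtain s2 n2 where "v = s2 * x ^ n2" "s2 \<notin> Q" by blast
    have "s1 * s2 \<notin> Q" using Q \<open>s1 \<notin> Q\<close> \<open>s2 \<notin> Q\<close> unfolding prime_ideal_def by blast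
    moreover have "u * v = (s1 * s2) * x ^ (n1 + n2)" using \<open>u = _\<close> \<open>v = _\<close> by (simp add: algebra_simps power_add)
    ultimately show ?thesis unfolding S_def by blast
  qed
  have disj: "J \<inter> S = {}"
  proof -
    have "s \<in> J" if "s * x ^ n \<in> J" for s n using that
      by (induction n arbitrary: s) (auto simp: mult.assoc[symmetric] intro: reg)
    then show ?thesis unfolding S_def using JQ by auto
  qed
  obtain P where P: "prime_ideal P" "J \<subseteq> P" "P \<inter> S = {}"
    using prime_avoid[OF J S1 Smul disj] by blast
  have "P \<subseteq> Q"
  proof
    fix y assume "y \<in> P"
    show "y \<in> Q"
    proof (rule ccontr)
      assume "y \<notin> Q" then have "y = y * x ^ 0 \<and> y \<notin> Q" by simp
      then have "y \<in> S" unfolding S_def by blast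
      then show False using P \<open>y \<in> P\<close> by auto
    qed
  qed
  moreover have "x \<notin> P"
  proof
    assume "x \<in> P"
    moreover have "x = 1 * x ^ 1 \<and> 1 \<notin> Q" using prime_not_one[OF Q] by simp
    then have "x \<in> S" unfolding S_def by blast
    ultimately show False using P by auto
  qed
  ultimately show ?thesis using P xQ by blast
qed

abbreviation lk where "lk \<equiv> Poly_Mapping.lookup"
abbreviation ks where "ks \<equiv> Poly_Mapping.keys"
abbreviation sg where "sg \<equiv> Poly_Mapping.single"

lemma Sum_when_single: "Sum_any (\<lambda>q. ((a when s = q) when k = l + q)) = (a when k = l + s)"
proof -
  have "Sum_any (\<lambda>q. ((a when s = q) when k = l + q)) = Sum_any (\<lambda>q. (a when k = l + q) when q = s)"
    by (intro Sum_any.cong) (auto simp: when_def)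
  then show ?thesis by simp
qed

definition mdom :: "'v set \<Rightarrow> ('v \<Rightarrow>\<^sub>0 nat) \<Rightarrow> ('v \<Rightarrow>\<^sub>0 nat) \<Rightarrow> bool" where
  "mdom X s m \<longleftrightarrow> (\<forall>v\<in>X. lk s v \<le> lk m v)"

definition MIx :: "'v set \<Rightarrow> ('v \<Rightarrow>\<^sub>0 nat) set \<Rightarrow> ('v, 'k::comm_ring_1) mpoly set" where
  "MIx X S = {f. \<forall>m\<in>ks f. \<exists>s\<in>S. mdom X s m}"

lemma mdom_add: "mdom X s b \<Longrightarrow> mdom X s (a + b)"
  unfolding mdom_def by (auto simp: lookup_add)

lemma MIx_ideal: "is_ideal (MIx X S :: ('v, 'k::comm_ring_1) mpoly set)"
  unfolding is_ideal_def MIx_def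
proof (intro conjI ballI allI)
  fix f g :: "('v, 'k) mpoly"
  assume "f \<in> {f. \<forall>m\<in>ks f. \<exists>s\<in>S. mdom X s m}" "g \<in> {f. \<forall>m\<in>ks f. \<exists>s\<in>S. mdom X s m}"
  then show "f + g \<in> {f. \<forall>m\<in>ks f. \<exists>s\<in>S. mdom X s m}" using keys_add[of f g] by blast
next
  fix f r :: "('v, 'k) mpoly"
  assume f: "f \<in> {f. \<forall>m\<in>ks f. \<exists>s\<in>S. mdom X s m}"
  show "r * f \<in> {f. \<forall>m\<in>ks f. \<exists>s\<in>S. mdom X s m}"
  proof (intro CollectI ballI)
    fix m assume "m \<in> ks (r * f)"
    then obtain a b where "m = a + b" "b \<in> ks f" using keys_mult[of r f] by blast
    then show "\<exists>s\<in>S. mdom X s m" using f mdom_add by blast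
  qed
qed simp

lemma MIx_iff: "f \<in> MIx X S \<longleftrightarrow> (\<forall>m\<in>ks f. \<exists>s\<in>S. mdom X s m)"
  unfolding MIx_def by simp

lemma keys_single': "ks (sg m (k::'k::zero)) = (if k = 0 then {} else {m})"
  by simp

lemma MIx_single: "sg m k \<in> MIx X S \<longleftrightarrow> (k = 0 \<or> (\<exists>s\<in>S. mdom X s m))"
  unfolding MIx_def by auto

definition gens :: "('v \<Rightarrow>\<^sub>0 nat) set \<Rightarrow> ('v, 'k::comm_ring_1) mpoly set" where
  "gens S = (\<lambda>s. sg s 1) ` S"

lemma gens_MIx: "ideal_gen (gens S) \<subseteq> MIx X S"
  by (rule ideal_gen_least[OF MIx_ideal]) (auto simp: gens_def MIx_single mdom_def)

lemma update_as_add: "a \<notin> ks f \<Longrightarrow> Poly_Mapping.update a b f = f + sg a b"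
  by (rule poly_mapping_eqI) (auto simp: lookup_update lookup_add lookup_single in_keys_iff when_def)

lemma split_mon: "mdom UNIV s m \<Longrightarrow> m = (m - s) + s"
  by (rule poly_mapping_eqI) (auto simp: mdom_def lookup_add lookup_minus)

lemma MIx_gens: "MIx UNIV S \<subseteq> ideal_gen (gens S :: ('v, 'k::comm_ring_1) mpoly set)"
proof
  fix f :: "('v, 'k) mpoly"
  show "f \<in> MIx UNIV S \<Longrightarrow> f \<in> ideal_gen (gens S)"
  proof (induction f rule: update_induct)
    case const then show ?case by (simp add: ideal_0[OF ideal_gen_ideal])
  next
    case (update f a b)
    have ks: "ks (Poly_Mapping.update a b f) = insert a (ks f)" using update by (simp add: keys_update)
    have "f \<in> MIx UNIV S" using update.prems ks unfolding MIx_def by auto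
    then have f: "f \<in> ideal_gen (gens S)" by (rule update.IH)
    obtain s where s: "s \<in> S" "mdom UNIV s a" using update.prems ks unfolding MIx_def by auto
    have "sg a b = sg (a - s) b * sg s 1"
      by (subst split_mon[OF s(2)]) (simp add: mult_single)
    also have "\<dots> \<in> ideal_gen (gens S)"
      by (rule ideal_mult[OF ideal_gen_ideal]) (use s in \<open>auto simp: gens_def intro: ideal_gen_sub[THEN subsetD]\<close>)
    finally show ?case using update_as_add[OF update.hyps(1)] f
      by (simp add: ideal_add[OF ideal_gen_ideal])
  qed
qed

lemma MIx_eq_gen: "MIx UNIV S = ideal_gen (gens S :: ('v, 'k::comm_ring_1) mpoly set)"
  using MIx_gens gens_MIx by blast

lemma Var_pow: "(Var v :: ('v, 'k::comm_ring_1) mpoly) ^ n = sg (sg v n) 1"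
proof (induction n)
  case 0 then show ?case by simp
next
  case (Suc n)
  then show ?case by (simp add: Var_def mult_single single_add[symmetric])
qed

lemma Var_mult_pow: "(Var i * Var j ^ n :: ('v, 'k::comm_ring_1) mpoly) = sg (sg i 1 + sg j n) 1"
  by (simp add: Var_pow) (simp add: Var_def mult_single)

lemma lookup_mult_single:
  fixes g :: "('v, 'k::comm_ring_1) mpoly"
  shows "lk (g * sg s a) (l + s) = lk g l * (a :: 'k :: comm_ring_1)"
proof -
  have "lk (g * sg s a) (l + s) = Sum_any (\<lambda>l'. lk g l' * Sum_any (\<lambda>q. (a when s = q) when l + s = l' + q))"
    by (simp add: lookup_mult lookup_single)
  also have "\<dots> = Sum_any (\<lambda>l'. lk g l' * (a when l + s = l' + s))"
    by (simp only: Sum_when_single)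
  also have "\<dots> = Sum_any (\<lambda>l'. lk g l' * a when l' = l)"
    by (intro Sum_any.cong) (auto simp: when_def dest: add_right_imp_eq)
  also have "\<dots> = lk g l * a" by simp
  finally show ?thesis .
qed

lemma lookup_mult_single0:
  fixes g :: "('v, 'k::comm_ring_1) mpoly"
  assumes "\<And>l. k \<noteq> l + s"
  shows "lk (g * sg s a) k = (0 :: 'k :: comm_ring_1)"
proof -
  have "lk (g * sg s a) k = Sum_any (\<lambda>l'. lk g l' * Sum_any (\<lambda>q. (a when s = q) when k = l' + q))"
    by (simp add: lookup_mult lookup_single)
  also have "\<dots> = Sum_any (\<lambda>l'. lk g l' * (a when k = l' + s))"
    by (simp only: Sum_when_single)
  also have "\<dots> = 0" using assms by (simp add: when_def)
  finally show ?thesis .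
qed

definition psi :: "'v \<Rightarrow> 'k::comm_ring_1 poly \<Rightarrow> ('v, 'k) mpoly" where
  "psi v h = poly (map_poly (\<lambda>k. sg 0 k) h) (Var v)"

lemma psi_pCons: "psi v (pCons a p) = sg 0 a + Var v * psi v p"
  by (simp add: psi_def map_poly_pCons)

lemma psi_0 [simp]: "psi v 0 = 0"
  by (simp add: psi_def)

lemma map_poly_sg_add: "map_poly (\<lambda>k. sg 0 k) (p + q) = map_poly (\<lambda>k. sg 0 k) p + map_poly (\<lambda>k. sg (0::'v \<Rightarrow>\<^sub>0 nat) (k::'k::comm_ring_1)) q"
  by (rule poly_eqI) (simp add: coeff_map_poly single_add)

lemma psi_add: "psi v (p + q) = psi v p + psi v q"
  by (simp add: psi_def map_poly_sg_add)

lemma psi_smult: "psi v (smult a p) = sg 0 a * psi v p"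
  by (simp add: psi_def map_poly_smult mult_single)

lemma psi_mult: "psi v (p * q) = psi v p * psi v q"
proof (induction p)
  case 0 then show ?case by simp
next
  case (pCons a p)
  have "psi v (pCons a p * q) = psi v (smult a q + pCons 0 (p * q))" by simp
  also have "\<dots> = sg 0 a * psi v q + Var v * (psi v p * psi v q)"
    by (simp only: psi_add psi_smult psi_pCons pCons.IH) simp
  also have "\<dots> = psi v (pCons a p) * psi v q" by (simp add: psi_pCons algebra_simps)
  finally show ?case .
qed

lemma psi_const: "psi v [:k:] = sg 0 k"
  by (simp add: psi_pCons)

lemma psi_1 [simp]: "psi v 1 = 1"
  by (simp add: one_pCons psi_const del: pCons_one)

lemma psi_pow: "psi v (p ^ n) = psi v p ^ n"
  by (induction n) (simp_all add: psi_mult)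

lemma psi_minus: "psi v (p - q) = psi v p - psi v q"
  using psi_add[of v "p - q" q] by (simp add: algebra_simps)

lemma psi_monom: "psi v (monom k n) = sg (sg v n) k"
  by (simp add: psi_def map_poly_monom poly_monom Var_pow mult_single)

lemma psi_X: "psi v [:0, 1:] = Var v"
  by (simp add: psi_pCons psi_const)

lemma psi_sum: "psi v h = (\<Sum>i\<le>degree h. sg (sg v i) (coeff h i))"
proof -
  have d: "degree (map_poly (\<lambda>k. sg (0::'v \<Rightarrow>\<^sub>0 nat) k) h) = degree h"
    by (rule degree_map_poly) (metis single_zero inj_single injD)
  show ?thesis
    by (simp add: psi_def poly_altdef d coeff_map_poly Var_pow mult_single)
qed

lemma sat:
  fixes g :: "('v, 'k::field) mpoly" and h :: "'k poly"
  assumes cf: "\<And>m j. B (m + sg c j) = B m" and h: "h \<noteq> 0"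
    and gh: "\<forall>m\<in>ks (g * psi c h). B m"
  shows "\<forall>m\<in>ks g. B m"
proof (rule ccontr)
  assume "\<not> ?thesis"
  then obtain m0 where m0: "m0 \<in> ks g" "\<not> B m0" by auto
  define J where "J = {j. m0 + sg c j \<in> ks g}"
  have "inj (\<lambda>j. m0 + sg c j)"
    by (rule injI) (metis add_left_imp_eq inj_single injD)
  then have finJ: "finite J" unfolding J_def
    using finite_vimageI[of "ks g" "\<lambda>j. m0 + sg c j"] by (simp add: vimage_def)
  have "0 \<in> J" unfolding J_def using m0 by simp
  define jm where "jm = Max J"
  have jmJ: "jm \<in> J" using finJ \<open>0 \<in> J\<close> unfolding jm_def by (intro Max_in) auto
  have jmax: "j \<le> jm" if "j \<in> J" for j using finJ that unfolding jm_def by simp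
  define D where "D = degree h"
  define k where "k = m0 + sg c (jm + D)"
  have trm: "lk (g * sg (sg c i) (coeff h i)) k = lk g (m0 + sg c (jm + D - i)) * coeff h i"
    if "i \<le> D" for i
  proof -
    have "k = (m0 + sg c (jm + D - i)) + sg c i"
      using that by (simp add: k_def add.assoc single_add[symmetric])
    then show ?thesis by (simp add: lookup_mult_single)
  qed
  have "lk (g * psi c h) k = (\<Sum>i\<le>D. lk (g * sg (sg c i) (coeff h i)) k)"
    by (simp add: psi_sum D_def sum_distrib_left lookup_sum)
  also have "\<dots> = (\<Sum>i\<le>D. lk g (m0 + sg c (jm + D - i)) * coeff h i)"
    by (intro sum.cong) (auto simp: trm)
  also have "\<dots> = lk g (m0 + sg c jm) * coeff h D"
  proof -
    have "(\<Sum>i\<le>D. lk g (m0 + sg c (jm + D - i)) * coeff h i) =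
          (\<Sum>i\<in>insert D {..<D}. lk g (m0 + sg c (jm + D - i)) * coeff h i)"
      by (intro sum.cong) auto
    also have "\<dots> = lk g (m0 + sg c jm) * coeff h D +
                    (\<Sum>i<D. lk g (m0 + sg c (jm + D - i)) * coeff h i)"
      by (subst sum.insert) auto
    also have "(\<Sum>i<D. lk g (m0 + sg c (jm + D - i)) * coeff h i) = 0"
    proof (intro sum.neutral ballI)
      fix i assume "i \<in> {..<D}"
      then have "jm + D - i \<notin> J" using jmax by force
      then show "lk g (m0 + sg c (jm + D - i)) * coeff h i = 0"
        unfolding J_def by (simp add: in_keys_iff)
    qed
    finally show ?thesis by simp
  qed
  also have "\<dots> \<noteq> 0"
    using jmJ h unfolding J_def D_def by (simp add: in_keys_iff)
  finally have "k \<in> ks (g * psi c h)" by (simp add: in_keys_iff)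
  then have "B k" using gh by blast
  then have "B m0" unfolding k_def using cf by simp
  then show False using m0 by simp
qed

lemma split_var: "lk x a > 0 \<Longrightarrow> sg x k = sg (x - sg a 1) k * (Var a :: ('v, 'k::comm_ring_1) mpoly)"
proof -
  assume "lk x a > 0"
  then have "x = (x - sg a 1) + sg a 1"
    by (intro poly_mapping_eqI) (auto simp: lookup_add lookup_minus lookup_single when_def)
  then show ?thesis unfolding Var_def by (simp only: mult_single mult_1_right)
qed

lemma dec:
  fixes f :: "('v, 'k::comm_ring_1) mpoly"
  assumes U: "UNIV = {a, b, c}"
  shows "\<exists>f' h. f = f' + psi c h \<and> f' \<in> ideal_gen {Var a, Var b}"
proof (induction f rule: update_induct)
  case const then show ?case by (intro exI[of _ 0]) (simp add: ideal_0[OF ideal_gen_ideal])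
next
  case (update f x k)
  obtain f1 h1 where f1: "f = f1 + psi c h1" "f1 \<in> ideal_gen {Var a, Var b}" using update.IH by blast
  have upd: "Poly_Mapping.update x k f = f + sg x k" by (rule update_as_add[OF update.hyps(1)])
  have iG: "is_ideal (ideal_gen {Var a, Var b} :: ('v, 'k) mpoly set)" by (rule ideal_gen_ideal)
  show ?case
  proof (cases "lk x a > 0 \<or> lk x b > 0")
    case True
    have Va: "Var a \<in> ideal_gen {Var a, Var b}" and Vb: "Var b \<in> ideal_gen {Var a, Var b}"
      using ideal_gen_sub by blast+
    from True have "sg x k \<in> ideal_gen {Var a, Var b}"
    proof
      assume "lk x a > 0"
      then show ?thesis by (simp only: split_var[of x a k]) (rule ideal_mult[OF iG Va])
    next
      assume "lk x b > 0"
      then show ?thesis by (simp only: split_var[of x b k]) (rule ideal_mult[OF iG Vb])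
    qed
    moreover have "Poly_Mapping.update x k f = (f1 + sg x k) + psi c h1"
      using upd f1(1) by (simp add: add_ac)
    ultimately show ?thesis using f1(2) ideal_add[OF iG] by blast
  next
    case False
    have xeq: "x = sg c (lk x c)"
    proof (rule poly_mapping_eqI)
      fix v
      have "v \<in> {a, b, c}" using U by blast
      then show "lk x v = lk (sg c (lk x c)) v"
        using False by (auto simp: lookup_single when_def)
    qed
    have "sg x k = sg (sg c (lk x c)) k" using arg_cong[OF xeq, of "\<lambda>y. sg y k"] .
    then have "sg x k = psi c (monom k (lk x c))" by (simp only: psi_monom)
    then have "Poly_Mapping.update x k f = f1 + psi c (h1 + monom k (lk x c))"
      using upd f1(1) by (simp add: psi_add add_ac)
    then show ?thesis using f1(2) by blast
  qed
qed

lemma nil_pow: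
  fixes x y u v :: "'a::comm_ring_1"
  assumes Q: "is_ideal Q" and x: "x ^ p \<in> Q" and y: "y ^ q \<in> Q"
  shows "(x * u + y * v) ^ (p + q) \<in> Q"
proof -
  have "(x * u + y * v) ^ (p + q) = (\<Sum>k\<le>p+q. of_nat ((p + q) choose k) * (x * u) ^ k * (y * v) ^ (p + q - k))"
    by (rule binomial_ring)
  also have "\<dots> \<in> Q"
  proof (rule ideal_sum[OF Q])
    show "finite {..p+q}" by simp
  next
    fix k assume "k \<in> {..p+q}"
    show "of_nat ((p + q) choose k) * (x * u) ^ k * (y * v) ^ (p + q - k) \<in> Q"
    proof (cases "p \<le> k")
      case True
      define m where "m = k - p"
      have m: "k = m + p" using True unfolding m_def by simp
      have "of_nat ((p + q) choose k) * (x * u) ^ k * (y * v) ^ (p + q - k) =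
          (of_nat ((p + q) choose k) * (x ^ m * u ^ k) * (y * v) ^ (p + q - k)) * x ^ p"
        unfolding m by (simp only: power_add power_mult_distrib mult_ac)
      then show ?thesis using ideal_mult[OF Q x] by simp
    next
      case False
      then have "q \<le> p + q - k" by simp
      define m where "m = p + q - k - q"
      have m: "p + q - k = m + q" using \<open>q \<le> p + q - k\<close> unfolding m_def by simp
      have "of_nat ((p + q) choose k) * (x * u) ^ k * (y * v) ^ (p + q - k) =
          (of_nat ((p + q) choose k) * (x * u) ^ k * (y ^ m * v ^ (p + q - k))) * y ^ q"
        unfolding m by (simp only: power_add power_mult_distrib mult_ac)
      then show ?thesis using ideal_mult[OF Q y] by simp
    qed
  qed
  finally show ?thesis .
qed

lemma reg:
  fixes Q :: "('v, 'k::field) mpoly set"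
  assumes Q: "is_ideal Q" and sat: "\<And>g h. h \<noteq> 0 \<Longrightarrow> g * psi c h \<in> Q \<Longrightarrow> g \<in> Q"
    and h: "h \<noteq> 0" and n: "n ^ N \<in> Q" and g: "g * (psi c h + n) \<in> Q"
  shows "g \<in> Q"
proof -
  let ?u = "psi c h"
  have "?u ^ N - (- n) ^ N = (?u - (- n)) * (\<Sum>i<N. (- n) ^ (N - Suc i) * ?u ^ i)"
    by (rule power_diff_sumr2)
  then have "g * ?u ^ N = (g * (?u + n)) * (\<Sum>i<N. (- n) ^ (N - Suc i) * ?u ^ i) + ((-1) ^ N * g) * n ^ N"
    by (simp add: algebra_simps power_minus[of n N])
  also have "\<dots> \<in> Q" by (rule ideal_add[OF Q ideal_mult2[OF Q g] ideal_mult[OF Q n]])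
  finally have "g * psi c (h ^ N) \<in> Q" by (simp add: psi_pow)
  moreover have "h ^ N \<noteq> 0" using h by simp
  ultimately show ?thesis using sat by blast
qed

lemma maxD: "maximal_ideal M \<Longrightarrow> is_ideal J \<Longrightarrow> M \<subseteq> J \<Longrightarrow> J = M \<or> J = UNIV"
  unfolding maximal_ideal_def by blast
lemma maxI: "maximal_ideal M \<Longrightarrow> is_ideal M" and maxU: "maximal_ideal M \<Longrightarrow> M \<noteq> UNIV"
  unfolding maximal_ideal_def by blast+
lemma primeD: "prime_ideal P \<Longrightarrow> a * b \<in> P \<Longrightarrow> a \<in> P \<or> b \<in> P"
  unfolding prime_ideal_def by blast
lemma primeI: "prime_ideal P \<Longrightarrow> is_ideal P" and primeU: "prime_ideal P \<Longrightarrow> P \<noteq> UNIV"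
  unfolding prime_ideal_def by blast+

lemma mdom_sg: "a \<in> X \<Longrightarrow> mdom X (sg a n) m \<longleftrightarrow> n \<le> lk m a"
  unfolding mdom_def by (auto simp: lookup_single when_def)

lemma MIx_mono_X: "Y \<subseteq> X \<Longrightarrow> MIx X S \<subseteq> MIx Y S"
  unfolding MIx_def mdom_def by blast

lemma sat_MIx:
  fixes g :: "('v, 'k::field) mpoly"
  assumes S0: "\<forall>s\<in>S. c \<in> X \<longrightarrow> lk s c = 0" and h: "h \<noteq> 0" and gh: "g * psi c h \<in> MIx X S"
  shows "g \<in> MIx X S"
proof -
  have cf: "(\<exists>s\<in>S. mdom X s (m + sg c j)) = (\<exists>s\<in>S. mdom X s m)" for m j
  proof -
    have "mdom X s (m + sg c j) = mdom X s m" if "s \<in> S" for s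
      using S0 that unfolding mdom_def by (auto simp: lookup_add lookup_single when_def)
    then show ?thesis by blast
  qed
  show ?thesis
    using sat[where B = "\<lambda>m. \<exists>s\<in>S. mdom X s m", OF cf h] gh unfolding MIx_def by blast
qed

lemma gens_pair: "gens {sg a 1, sg b 1} = {Var a, Var b}"
  by (auto simp: gens_def Var_def)

lemma Pab_MIx: "ideal_gen {Var a, Var b} = (MIx UNIV {sg a 1, sg b 1} :: ('v, 'k::comm_ring_1) mpoly set)"
proof -
  have "MIx UNIV {sg a 1, sg b 1} = (ideal_gen (gens {sg a 1, sg b 1}) :: ('v, 'k) mpoly set)" by (rule MIx_eq_gen)
  then show ?thesis by (simp only: gens_pair)
qed

definition MZ :: "('v, 'k::comm_ring_1) mpoly set" where
  "MZ = MIx UNIV (range (\<lambda>v. sg v 1))"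

lemma one_notin_MIx: "(1 :: ('v, 'k::comm_ring_1) mpoly) \<notin> MIx UNIV (range (\<lambda>v. sg v 1))"
  by (auto simp: MIx_def mdom_sg)

lemma Var_MZ: "Var v \<in> MZ"
proof -
  have "mdom UNIV (sg v 1) (sg v 1)" by (simp add: mdom_def)
  then show ?thesis unfolding MZ_def Var_def MIx_single by blast
qed

lemma nonzero_mon: "m \<noteq> 0 \<Longrightarrow> \<exists>v. mdom UNIV (sg v 1) (m :: 'v \<Rightarrow>\<^sub>0 nat)"
proof -
  assume "m \<noteq> 0"
  then obtain v where "lk m v \<noteq> 0" by (metis lookup_zero poly_mapping_eqI)
  then have "mdom UNIV (sg v 1) m" by (simp add: mdom_sg)
  then show ?thesis by blast
qed

lemma MZ_maximal: "maximal_ideal (MZ :: ('v, 'k::field) mpoly set)"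
  unfolding maximal_ideal_def
proof (intro conjI allI impI)
  show iZ: "is_ideal (MZ :: ('v, 'k) mpoly set)" unfolding MZ_def by (rule MIx_ideal)
  show "MZ \<noteq> (UNIV :: ('v, 'k) mpoly set)" using one_notin_MIx unfolding MZ_def by auto
  fix J :: "('v, 'k) mpoly set"
  assume J: "is_ideal J \<and> MZ \<subseteq> J"
  show "J = MZ \<or> J = UNIV"
  proof (rule ccontr)
    assume "\<not> (J = MZ \<or> J = UNIV)"
    then obtain f where f: "f \<in> J" "f \<notin> MZ" using J by blast
    define k0 where "k0 = lk f 0"
    have d: "f - sg 0 k0 \<in> MZ"
      unfolding MZ_def MIx_def
    proof (intro CollectI ballI)
      fix m assume "m \<in> ks (f - sg 0 k0)"
      then have "m \<noteq> 0" by (auto simp: in_keys_iff lookup_minus k0_def)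
      then show "\<exists>s\<in>range (\<lambda>v. sg v 1). mdom UNIV s m" using nonzero_mon by blast
    qed
    have "k0 \<noteq> 0"
    proof
      assume "k0 = 0"
      then have "f \<in> MZ" using d by simp
      then show False using f by simp
    qed
    have "sg 0 k0 = f - (f - sg 0 k0)" by simp
    also have "\<dots> \<in> J" using J d f ideal_diff[of J f "f - sg 0 k0"] by blast
    finally have "sg 0 (inverse k0) * sg 0 k0 \<in> J" using J by (intro ideal_mult) auto
    then have "1 \<in> J" using \<open>k0 \<noteq> 0\<close> by (simp add: mult_single)
    then have "J = UNIV" using J ideal_one by blast
    then show False using \<open>\<not> (J = MZ \<or> J = UNIV)\<close> by simp
  qed
qed

lemma Pab_sub_MZ: "ideal_gen {Var a, Var b} \<subseteq> (MZ :: ('v, 'k::comm_ring_1) mpoly set)"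
proof (rule ideal_gen_least)
  show "is_ideal (MZ :: ('v, 'k) mpoly set)" unfolding MZ_def by (rule MIx_ideal)
  show "{Var a, Var b} \<subseteq> (MZ :: ('v, 'k) mpoly set)" using Var_MZ by auto
qed

lemma Var_notin_Pab: "c \<noteq> a \<Longrightarrow> c \<noteq> b \<Longrightarrow> (Var c :: ('v, 'k::comm_ring_1) mpoly) \<notin> ideal_gen {Var a, Var b}"
  unfolding Pab_MIx by (simp add: Var_def MIx_single mdom_sg lookup_single when_def)

lemma Pab_prime:
  assumes U: "UNIV = {a, b, c}" and ab: "a \<noteq> b" "a \<noteq> c" "b \<noteq> c"
  shows "prime_ideal (ideal_gen {Var a, Var b} :: ('v, 'k::field) mpoly set)"
  unfolding prime_ideal_def
proof (intro conjI allI impI)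
  let ?P = "ideal_gen {Var a, Var b} :: ('v, 'k) mpoly set"
  show iP: "is_ideal ?P" by (rule ideal_gen_ideal)
  show "?P \<noteq> UNIV" using Pab_sub_MZ[of a b] maxU[OF MZ_maximal] by auto
  fix f g assume fg: "f * g \<in> ?P"
  show "f \<in> ?P \<or> g \<in> ?P"
  proof (cases "f \<in> ?P")
    case True then show ?thesis by blast
  next
    case False
    then have nf: "f \<notin> ?P" .
    obtain f' h where fd: "f = f' + psi c h" "f' \<in> ?P" using dec[OF U] by blast
    have "h \<noteq> 0" using fd nf by auto
    have "g * psi c h = f * g - g * f'" using fd by (simp add: algebra_simps)
    also have "\<dots> \<in> ?P" by (rule ideal_diff[OF iP fg ideal_mult[OF iP fd(2)]])
    finally have "g * psi c h \<in> MIx UNIV {sg a 1, sg b 1}" by (simp add: Pab_MIx)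
    then have "g \<in> MIx UNIV {sg a 1, sg b 1}"
      by (rule sat_MIx[rotated 2]) (use ab \<open>h \<noteq> 0\<close> in \<open>auto simp: lookup_single when_def\<close>)
    then show ?thesis by (simp add: Pab_MIx)
  qed
qed

lemma Pab_not_max:
  assumes "a \<noteq> c" "b \<noteq> c" "maximal_ideal (M :: ('v, 'k::field) mpoly set)"
  shows "M \<noteq> ideal_gen {Var a, Var b}"
proof
  let ?Z = "MZ :: ('v, 'k) mpoly set"
  assume M: "M = ideal_gen {Var a, Var b}"
  have iZ: "is_ideal ?Z" using maxI[OF MZ_maximal] .
  have "M \<subseteq> ?Z" using Pab_sub_MZ[of a b] M by simp
  then have "?Z = M \<or> ?Z = UNIV" by (rule maxD[OF assms(3) iZ])
  moreover have "?Z \<noteq> M" using M Var_MZ[of c] Var_notin_Pab[of c a b] assms by auto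
  ultimately show False using maxU[OF MZ_maximal] by blast
qed

lemma orientD:
  assumes "is_orientation C3_graph E"
  shows "(x, y) \<in> E \<Longrightarrow> x \<noteq> y" and "x \<noteq> y \<Longrightarrow> (x, y) \<in> E \<longleftrightarrow> (y, x) \<notin> E"
proof -
  have A: "\<forall>x y. (x, y) \<in> E \<longrightarrow> C3_graph x y" and B: "\<forall>x y. C3_graph x y \<longrightarrow> ((x, y) \<in> E \<longleftrightarrow> (y, x) \<notin> E)"
    using assms unfolding is_orientation_def by (rule conjunct1, rule conjunct2)
  show "(x, y) \<in> E \<Longrightarrow> x \<noteq> y" using A unfolding C3_graph_def by blast
  show "x \<noteq> y \<Longrightarrow> (x, y) \<in> E \<longleftrightarrow> (y, x) \<notin> E"
  proof -
    assume "x \<noteq> y"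
    then have "C3_graph x y" unfolding C3_graph_def .
    then show ?thesis using B by blast
  qed
qed

lemma gen_in_I: "(i, j) \<in> E \<Longrightarrow> Var i * Var j ^ w j \<in> edge_ideal E w"
  unfolding edge_ideal_def by (rule ideal_gen_sub[THEN subsetD]) blast

lemma prime_cover:
  assumes Q: "prime_ideal Q" and IQ: "edge_ideal E w \<subseteq> Q" and O: "is_orientation C3_graph E" and ij: "i \<noteq> j"
  shows "Var i \<in> Q \<or> Var j \<in> Q"
proof -
  note pr = primeD[OF Q]
  have "(i, j) \<in> E \<or> (j, i) \<in> E" using orientD(2)[OF O ij] by blast
  then show ?thesis
  proof
    assume "(i, j) \<in> E"
    then have "Var i * Var j ^ w j \<in> Q" using gen_in_I[of i j E w] IQ by blast
    then have "Var i \<in> Q \<or> Var j ^ w j \<in> Q" by (rule pr)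
    then show ?thesis using prime_pow[OF Q, of "Var j" "w j"] by blast
  next
    assume "(j, i) \<in> E"
    then have "Var j * Var i ^ w i \<in> Q" using gen_in_I[of j i E w] IQ by blast
    then have "Var j \<in> Q \<or> Var i ^ w i \<in> Q" by (rule pr)
    then show ?thesis using prime_pow[OF Q, of "Var i" "w i"] by blast
  qed
qed

lemma three:
  assumes "CARD('v::finite) = 3"
  shows "\<exists>a b c :: 'v. UNIV = {a, b, c} \<and> a \<noteq> b \<and> a \<noteq> c \<and> b \<noteq> c"
  using assms card_3_iff[of "UNIV :: 'v set"] by auto

lemma prime_pair:
  fixes Q :: "('v::finite, 'k::comm_ring_1) mpoly set"
  assumes C: "CARD('v) = 3" and Q: "prime_ideal Q" and IQ: "edge_ideal E w \<subseteq> Q"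
    and O: "is_orientation C3_graph E"
  shows "\<exists>a b c. UNIV = {a, b, c} \<and> a \<noteq> b \<and> a \<noteq> c \<and> b \<noteq> c \<and> Var a \<in> Q \<and> Var b \<in> Q"
proof -
  obtain x y z :: 'v where U: "UNIV = {x, y, z}" "x \<noteq> y" "x \<noteq> z" "y \<noteq> z" using three[OF C] by blast
  have c1: "Var x \<in> Q \<or> Var y \<in> Q" and c2: "Var x \<in> Q \<or> Var z \<in> Q" and c3: "Var y \<in> Q \<or> Var z \<in> Q"
    using prime_cover[OF Q IQ O] U by auto
  show ?thesis
  proof (cases "Var x \<in> Q")
    case False
    then have "Var y \<in> Q" "Var z \<in> Q" using c1 c2 by auto
    moreover have "UNIV = {y, z, x}" using U(1) by (simp add: insert_commute)
    ultimately show ?thesis using U(2-4) by blast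
  next
    case True
    show ?thesis
    proof (cases "Var y \<in> Q")
      case True
      then show ?thesis using \<open>Var x \<in> Q\<close> U by blast
    next
      case False
      then have "Var z \<in> Q" using c3 by auto
      moreover have "UNIV = {x, z, y}" using U(1) by (simp add: insert_commute)
      ultimately show ?thesis using \<open>Var x \<in> Q\<close> U(2-4) by blast
    qed
  qed
qed

lemma I_sub_Pab:
  assumes O: "is_orientation C3_graph E" and wpos: "\<forall>x. w x > 0"
    and U: "UNIV = {a, b, c}"
  shows "(edge_ideal E w :: ('v, 'k::comm_ring_1) mpoly set) \<subseteq> ideal_gen {Var a, Var b}"
  unfolding edge_ideal_def
proof (rule ideal_gen_least[OF ideal_gen_ideal], safe)
  fix i j assume ij: "(i, j) \<in> E"
  let ?P = "ideal_gen {Var a, Var b} :: ('v, 'k) mpoly set"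
  have iP: "is_ideal ?P" by (rule ideal_gen_ideal)
  have Va: "Var a \<in> ?P" and Vb: "Var b \<in> ?P" using ideal_gen_sub by blast+
  have "i \<noteq> j" using orientD(1)[OF O ij] .
  then have "i \<in> {a, b} \<or> j \<in> {a, b}" using U by (metis UNIV_I empty_iff insert_iff)
  then show "Var i * Var j ^ w j \<in> ?P"
  proof
    assume "i \<in> {a, b}"
    then have "Var i \<in> ?P" using Va Vb by auto
    then show ?thesis by (rule ideal_mult2[OF iP])
  next
    assume "j \<in> {a, b}"
    then have "Var j \<in> ?P" using Va Vb by auto
    then have "Var j ^ w j \<in> ?P" using wpos ideal_pow[OF iP] by blast
    then show ?thesis by (rule ideal_mult[OF iP])
  qed
qed

lemma edge_ideal_ideal: "is_ideal (edge_ideal E w)"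
  unfolding edge_ideal_def by (rule ideal_gen_ideal)

lemma psi_unit: "(k::'k::field) \<noteq> 0 \<Longrightarrow> is_ideal Q \<Longrightarrow> psi v [:k:] \<in> Q \<Longrightarrow> Q = (UNIV :: ('v, 'k) mpoly set)"
proof -
  assume k: "k \<noteq> 0" and Q: "is_ideal Q" and p: "psi v [:k:] \<in> Q"
  have "sg 0 (inverse k) * sg 0 k \<in> Q" using p Q by (simp add: psi_const ideal_mult)
  then have "1 \<in> Q" using k by (simp add: mult_single)
  then show ?thesis using Q ideal_one by blast
qed

lemma min_degree:
  assumes "h \<in> K" "h \<noteq> 0"
  shows "\<exists>p. p \<in> K \<and> p \<noteq> 0 \<and> (\<forall>p'. p' \<in> K \<and> p' \<noteq> 0 \<longrightarrow> degree p \<le> degree p')"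
  using ex_has_least_nat[of "\<lambda>h. h \<in> K \<and> h \<noteq> 0" h degree] assms by blast

lemma no_long_chain:
  fixes Q0 Q1 Q2 :: "('v::finite, 'k::field) mpoly set"
  assumes C: "CARD('v) = 3" and O: "is_orientation C3_graph E"
    and P0: "prime_ideal Q0" and P1: "prime_ideal Q1" and P2: "prime_ideal Q2"
    and I0: "edge_ideal E w \<subseteq> Q0" and s01: "Q0 \<subset> Q1" and s12: "Q1 \<subset> Q2"
  shows False
proof -
  obtain a b c where U: "UNIV = {a, b, c}" "a \<noteq> b" "a \<noteq> c" "b \<noteq> c" and ab: "Var a \<in> Q0" "Var b \<in> Q0"
    using prime_pair[OF C P0 I0 O] by blast
  have PQ0: "ideal_gen {Var a, Var b} \<subseteq> Q0" using ab by (intro ideal_gen_least[OF primeI[OF P0]]) auto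
  have iQ0: "is_ideal Q0" and iQ1: "is_ideal Q1" and iQ2: "is_ideal Q2" using P0 P1 P2 primeI by auto
  obtain f1 where f1: "f1 \<in> Q1" "f1 \<notin> Q0" using s01 by blast
  obtain f1' h1 where d1: "f1 = f1' + psi c h1" "f1' \<in> ideal_gen {Var a, Var b}" using dec[OF U(1)] by blast
  have f1'Q0: "f1' \<in> Q0" using d1(2) PQ0 by blast
  then have f1'Q1: "f1' \<in> Q1" using s01 by blast
  have h1Q1: "psi c h1 \<in> Q1"
  proof -
    have "psi c h1 = f1 - f1'" using d1 by simp
    also have "\<dots> \<in> Q1" by (rule ideal_diff[OF iQ1 f1(1) f1'Q1])
    finally show ?thesis .
  qed
  have "psi c h1 \<notin> Q0"
  proof
    assume "psi c h1 \<in> Q0"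
    then have "f1' + psi c h1 \<in> Q0" by (rule ideal_add[OF iQ0 f1'Q0])
    then show False using f1 d1(1) by simp
  qed
  then have h1: "h1 \<noteq> 0" using ideal_0[OF primeI[OF P0]] by auto
  obtain f2 where f2: "f2 \<in> Q2" "f2 \<notin> Q1" using s12 by blast
  obtain f2' h2 where d2: "f2 = f2' + psi c h2" "f2' \<in> ideal_gen {Var a, Var b}" using dec[OF U(1)] by blast
  have f2'Q1: "f2' \<in> Q1" using d2(2) PQ0 s01 by blast
  then have f2'Q2: "f2' \<in> Q2" using s12 by blast
  have h2Q2: "psi c h2 \<in> Q2"
  proof -
    have "psi c h2 = f2 - f2'" using d2 by simp
    also have "\<dots> \<in> Q2" by (rule ideal_diff[OF iQ2 f2(1) f2'Q2])
    finally show ?thesis .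
  qed
  have h2Q1: "psi c h2 \<notin> Q1"
  proof
    assume "psi c h2 \<in> Q1"
    then have "f2' + psi c h2 \<in> Q1" by (rule ideal_add[OF iQ1 f2'Q1])
    then show False using f2 d2(1) by simp
  qed
  define K1 where "K1 = {h. psi c h \<in> Q1}"
  define K2 where "K2 = {h. psi c h \<in> Q2}"
  have "h1 \<in> K1" using h1Q1 unfolding K1_def by simp
  then obtain p where p: "p \<in> K1" "p \<noteq> 0" and pmin: "\<And>p'. p' \<in> K1 \<Longrightarrow> p' \<noteq> 0 \<Longrightarrow> degree p \<le> degree p'"
    using min_degree[of h1 K1] h1 by blast
  have "h1 \<in> K2" using h1Q1 s12 unfolding K2_def by auto
  then obtain q where q: "q \<in> K2" "q \<noteq> 0" and qmin: "\<And>p'. p' \<in> K2 \<Longrightarrow> p' \<noteq> 0 \<Longrightarrow> degree q \<le> degree p'"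
    using min_degree[of h1 K2] h1 by blast
  have qdvd: "q dvd h" if "h \<in> K2" for h
  proof -
    have e: "h div q * q + h mod q = h" by simp
    have "psi c h = psi c (h div q * q + h mod q)" by (simp only: e)
    also have "\<dots> = psi c (h div q) * psi c q + psi c (h mod q)" by (simp only: psi_add psi_mult)
    finally have "psi c (h mod q) = psi c h - psi c (h div q) * psi c q" by (simp add: algebra_simps)
    also have "\<dots> \<in> Q2"
    proof (rule ideal_diff[OF iQ2])
      show "psi c h \<in> Q2" using that unfolding K2_def by simp
      show "psi c (h div q) * psi c q \<in> Q2" using q(1) unfolding K2_def by (simp add: ideal_mult[OF iQ2])
    qed
    finally have modK: "h mod q \<in> K2" unfolding K2_def by simp
    have dm: "h mod q = 0 \<or> degree (h mod q) < degree q" using degree_mod_less[OF q(2)] .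
    have "h mod q = 0"
    proof (rule ccontr)
      assume "h mod q \<noteq> 0"
      then have "degree q \<le> degree (h mod q)" using qmin[OF modK] by blast
      then show False using dm \<open>h mod q \<noteq> 0\<close> by simp
    qed
    then show ?thesis by (simp add: mod_eq_0_iff_dvd)
  qed
  have "p \<in> K2" using p s12 unfolding K1_def K2_def by auto
  then obtain e where pe: "p = q * e" using qdvd by blast
  have "psi c q * psi c e \<in> Q1" using p pe unfolding K1_def by (simp add: psi_mult)
  then have "psi c q \<in> Q1 \<or> psi c e \<in> Q1" by (rule primeD[OF P1])
  then show False
  proof
    assume "psi c q \<in> Q1"
    obtain t where "h2 = q * t" using qdvd[of h2] h2Q2 unfolding K2_def by auto
    then have "psi c h2 = psi c q * psi c t" by (simp add: psi_mult)
    also have "\<dots> \<in> Q1" using \<open>psi c q \<in> Q1\<close> iQ1 by (intro ideal_mult2)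
    finally show False using h2Q1 by simp
  next
    assume "psi c e \<in> Q1"
    have "e \<noteq> 0" using p pe by auto
    then have "degree p \<le> degree e" using pmin \<open>psi c e \<in> Q1\<close> unfolding K1_def by auto
    moreover have "degree p = degree q + degree e" using pe q \<open>e \<noteq> 0\<close> by (simp add: degree_mult_eq)
    ultimately have "degree q = 0" by simp
    then have qc: "q = [:coeff q 0:]" by (simp add: degree_0_id)
    have cq: "coeff q 0 \<noteq> 0"
    proof
      assume "coeff q 0 = 0"
      then have "q = 0" using qc by simp
      then show False using q(2) by simp
    qed
    have "psi c [:coeff q 0:] \<in> Q2" using q(1) qc unfolding K2_def by simp
    then have "Q2 = UNIV" by (rule psi_unit[OF cq iQ2])
    then show False using primeU[OF P2] by simp
  qed
qed

lemma height_one: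
  fixes M :: "('v::finite, 'k::field) mpoly set"
  assumes C: "CARD('v) = 3" and O: "is_orientation C3_graph E" and wpos: "\<forall>x. w x > 0"
    and M: "maximal_ideal M" and IM: "edge_ideal E w \<subseteq> M"
  shows "quot_height (edge_ideal E w) M = 1"
proof -
  let ?I = "edge_ideal E w :: ('v, 'k) mpoly set"
  let ?A = "{enat n | n. \<exists>C :: nat \<Rightarrow> ('v, 'k) mpoly set.
       (\<forall>i\<le>n. prime_ideal (C i) \<and> ?I \<subseteq> C i) \<and> (\<forall>i<n. C i \<subset> C (Suc i)) \<and> C n = M}"
  have PM: "prime_ideal M" using maximal_prime[OF M] .
  obtain a b c where U: "UNIV = {a, b, c}" "a \<noteq> b" "a \<noteq> c" "b \<noteq> c" and ab: "Var a \<in> M" "Var b \<in> M"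
    using prime_pair[OF C PM IM O] by blast
  let ?P = "ideal_gen {Var a, Var b} :: ('v, 'k) mpoly set"
  have PP: "prime_ideal ?P" using Pab_prime[OF U] .
  have IP: "?I \<subseteq> ?P" using I_sub_Pab[OF O wpos U(1)] .
  have PsM: "?P \<subset> M"
  proof -
    have "?P \<subseteq> M" using ab by (intro ideal_gen_least[OF maxI[OF M]]) auto
    moreover have "M \<noteq> ?P" using Pab_not_max[OF U(3) U(4) M] .
    ultimately show ?thesis by blast
  qed
  have "enat 1 \<in> ?A"
  proof -
    define Ch where "Ch = (\<lambda>i::nat. if i = 0 then ?P else M)"
    have "(\<forall>i\<le>1. prime_ideal (Ch i) \<and> ?I \<subseteq> Ch i) \<and> (\<forall>i<1. Ch i \<subset> Ch (Suc i)) \<and> Ch 1 = M"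
      using PP IP PsM PM IM unfolding Ch_def by (auto simp: le_Suc_eq)
    then have "\<exists>C :: nat \<Rightarrow> ('v, 'k) mpoly set. (\<forall>i\<le>1. prime_ideal (C i) \<and> ?I \<subseteq> C i) \<and> (\<forall>i<1. C i \<subset> C (Suc i)) \<and> C 1 = M"
      by (rule exI[of _ Ch])
    then show ?thesis by blast
  qed
  moreover have "x \<le> 1" if "x \<in> ?A" for x
  proof -
    obtain n Ch where x: "x = enat n" and Ch: "\<forall>i\<le>n. prime_ideal (Ch i) \<and> ?I \<subseteq> Ch i"
      "\<forall>i<n. Ch i \<subset> Ch (Suc i)" "Ch n = M" using \<open>x \<in> ?A\<close> by blast
    show ?thesis
    proof (rule ccontr)
      assume "\<not> x \<le> 1"
      then have n2: "n \<ge> 2" using x by (simp add: one_enat_def)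
      then obtain m where m: "n = Suc (Suc m)" by (metis add_2_eq_Suc le_Suc_ex)
      have c0: "prime_ideal (Ch m) \<and> ?I \<subseteq> Ch m" using Ch(1) m by simp
      have c1: "prime_ideal (Ch (Suc m))" using Ch(1) m by simp
      have c2: "prime_ideal (Ch (Suc (Suc m)))" using Ch(1) m by simp
      have s1: "Ch m \<subset> Ch (Suc m)" using Ch(2) m by simp
      have s2: "Ch (Suc m) \<subset> Ch (Suc (Suc m))" using Ch(2) m by simp
      show False using no_long_chain[OF C O conjunct1[OF c0] c1 c2 conjunct2[OF c0] s1 s2] .
    qed
  qed
  ultimately have "Sup ?A = enat 1" by (intro antisym Sup_least Sup_upper) (auto simp: one_enat_def)
  then show ?thesis unfolding quot_height_def by (simp add: one_enat_def)
qed

lemma grade_le1: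
  fixes M :: "('v::finite, 'k::field) mpoly set"
  assumes C: "CARD('v) = 3" and O: "is_orientation C3_graph E"
    and M: "maximal_ideal M" and IM: "edge_ideal E w \<subseteq> M"
    and fs: "set fs \<subseteq> M" "quot_regular_seq (edge_ideal E w) fs"
  shows "length fs \<le> 1"
proof (rule ccontr)
  assume "\<not> length fs \<le> 1"
  then have len: "length fs \<ge> 2" by simp
  let ?I = "edge_ideal E w :: ('v, 'k) mpoly set"
  have iI: "is_ideal ?I" by (rule edge_ideal_ideal)
  have reg: "\<And>k g. k < length fs \<Longrightarrow> g * fs ! k \<in> ideal_gen (?I \<union> set (take k fs)) \<Longrightarrow> g \<in> ideal_gen (?I \<union> set (take k fs))"
    using fs(2) unfolding quot_regular_seq_def by blast
  have t0: "take 0 fs = []" by simp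
  have t1: "take 1 fs = [fs ! 0]" using len by (cases fs) auto
  have ne: "fs \<noteq> []" using len by auto
  have reg0: "\<And>g. g * fs ! 0 \<in> ?I \<Longrightarrow> g \<in> ?I"
    using reg[of 0] ne by (simp add: ideal_gen_idem[OF iI])
  define J1 where "J1 = ideal_gen (?I \<union> {fs ! 0})"
  have reg1: "\<And>g. g * fs ! 1 \<in> J1 \<Longrightarrow> g \<in> J1"
    using reg[of 1] len t1 unfolding J1_def by simp
  have "0 < length fs" "1 < length fs" using len by auto
  then have "fs ! 0 \<in> set fs" "fs ! 1 \<in> set fs" by (auto intro: nth_mem)
  then have f0M: "fs ! 0 \<in> M" and f1M: "fs ! 1 \<in> M" using fs(1) by blast+
  have PM: "prime_ideal M" using maximal_prime[OF M] .
  have J1M: "J1 \<subseteq> M" unfolding J1_def using IM f0M by (intro ideal_gen_least[OF maxI[OF M]]) auto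
  have iJ1: "is_ideal J1" unfolding J1_def by (rule ideal_gen_ideal)
  obtain Q1 where Q1: "prime_ideal Q1" "J1 \<subseteq> Q1" "Q1 \<subset> M"
    using smaller_prime[OF iJ1 PM J1M f1M reg1] by blast
  have IQ1: "?I \<subseteq> Q1" and f0Q1: "fs ! 0 \<in> Q1" using Q1(2) ideal_gen_sub unfolding J1_def by blast+
  obtain Q0 where Q0: "prime_ideal Q0" "?I \<subseteq> Q0" "Q0 \<subset> Q1"
    using smaller_prime[OF iI Q1(1) IQ1 f0Q1 reg0] by blast
  show False using no_long_chain[OF C O Q0(1) Q1(1) PM Q0(2) Q0(3) Q1(3)] .
qed

definition SE :: "('v \<times> 'v) set \<Rightarrow> ('v \<Rightarrow> nat) \<Rightarrow> ('v \<Rightarrow>\<^sub>0 nat) set" where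
  "SE E w = {sg i 1 + sg j (w j) | i j. (i, j) \<in> E}"

lemma I_MIx: "(edge_ideal E w :: ('v, 'k::comm_ring_1) mpoly set) = MIx UNIV (SE E w)"
proof -
  have "(gens (SE E w) :: ('v, 'k) mpoly set) = {Var i * Var j ^ w j | i j. (i, j) \<in> E}"
    unfolding gens_def SE_def by (auto simp: Var_mult_pow)
  moreover have "MIx UNIV (SE E w) = (ideal_gen (gens (SE E w)) :: ('v, 'k) mpoly set)" by (rule MIx_eq_gen)
  ultimately show ?thesis unfolding edge_ideal_def by simp
qed

lemma mdom_SE:
  assumes "i \<noteq> j"
  shows "mdom X (sg i 1 + sg j n) m \<longleftrightarrow> (i \<in> X \<longrightarrow> 1 \<le> lk m i) \<and> (j \<in> X \<longrightarrow> n \<le> lk m j)"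
proof -
  have L: "lk (sg i 1 + sg j n) v = (if v = i then 1 else if v = j then n else 0)" for v
    using assms by (simp add: lookup_add lookup_single when_def)
  show ?thesis
  proof
    assume "mdom X (sg i 1 + sg j n) m"
    then have "\<forall>v\<in>X. lk (sg i 1 + sg j n) v \<le> lk m v" unfolding mdom_def .
    then show "(i \<in> X \<longrightarrow> 1 \<le> lk m i) \<and> (j \<in> X \<longrightarrow> n \<le> lk m j)"
      using L[of i] L[of j] assms by auto
  next
    assume A: "(i \<in> X \<longrightarrow> 1 \<le> lk m i) \<and> (j \<in> X \<longrightarrow> n \<le> lk m j)"
    show "mdom X (sg i 1 + sg j n) m" unfolding mdom_def
    proof
      fix v assume "v \<in> X"
      then show "lk (sg i 1 + sg j n) v \<le> lk m v" using A L[of v] by (cases "v = i"; cases "v = j") auto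
    qed
  qed
qed

lemma comb_caseB:
  fixes E :: "('v \<times> 'v) set" and T H :: "'v \<Rightarrow> bool" and x y z :: 'v
  assumes U: "UNIV = {x, y, z}" "x \<noteq> y" "x \<noteq> z" "y \<noteq> z"
    and tour: "\<And>p q. p \<noteq> q \<Longrightarrow> (p, q) \<in> E \<longleftrightarrow> (q, p) \<notin> E"
    and HT: "\<And>v. H v \<Longrightarrow> T v" and nz: "\<not> T z"
    and ws: "\<And>v. \<exists>u. u \<noteq> v \<and> (((v, u) \<in> E \<and> H u) \<or> ((u, v) \<in> E \<and> T u))"
  shows "\<exists>i j. (i, j) \<in> E \<and> T i \<and> H j"
proof -
  have nzH: "\<not> H z" using nz HT by blast
  have allu: "u = x \<or> u = y \<or> u = z" for u using U(1) by blast
  obtain u1 where u1: "u1 \<noteq> x" "((x, u1) \<in> E \<and> H u1) \<or> ((u1, x) \<in> E \<and> T u1)" using ws[of x] by blast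
  have "u1 = y" using u1 allu[of u1] nz nzH by blast
  then have wx: "((x, y) \<in> E \<and> H y) \<or> ((y, x) \<in> E \<and> T y)" using u1 by simp
  obtain u2 where u2: "u2 \<noteq> y" "((y, u2) \<in> E \<and> H u2) \<or> ((u2, y) \<in> E \<and> T u2)" using ws[of y] by blast
  have "u2 = x" using u2 allu[of u2] nz nzH by blast
  then have wy: "((y, x) \<in> E \<and> H x) \<or> ((x, y) \<in> E \<and> T x)" using u2 by simp
  have t: "(x, y) \<in> E \<longleftrightarrow> (y, x) \<notin> E" using tour[OF U(2)] .
  show ?thesis
  proof (cases "(x, y) \<in> E")
    case True
    then have "H y" "T x" using wx wy t by auto
    then show ?thesis using True by blast
  next
    case False
    then have "(y, x) \<in> E" using t by blast
    then have "T y" "H x" using wx wy t False by auto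
    then show ?thesis using \<open>(y, x) \<in> E\<close> by blast
  qed
qed

lemma comb:
  fixes E :: "('v \<times> 'v) set" and T H :: "'v \<Rightarrow> bool" and a b c x0 :: 'v
  assumes U: "UNIV = {a, b, c}" "a \<noteq> b" "a \<noteq> c" "b \<noteq> c"
    and irr: "\<And>p. (p, p) \<notin> E" and tour: "\<And>p q. p \<noteq> q \<Longrightarrow> (p, q) \<in> E \<longleftrightarrow> (q, p) \<notin> E"
    and HT: "\<And>v. H v \<Longrightarrow> T v" and one: "T x0 \<Longrightarrow> H x0"
    and wit: "\<And>v. \<exists>i j. (i, j) \<in> E \<and> (i \<noteq> v \<longrightarrow> T i) \<and> (j \<noteq> v \<longrightarrow> H j)"
  shows "\<exists>i j. (i, j) \<in> E \<and> T i \<and> H j"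
proof (rule ccontr)
  assume nf: "\<not> ?thesis"
  have ws: "\<exists>u. u \<noteq> v \<and> (((v, u) \<in> E \<and> H u) \<or> ((u, v) \<in> E \<and> T u))" for v
  proof -
    obtain i j where ij: "(i, j) \<in> E" "i \<noteq> v \<longrightarrow> T i" "j \<noteq> v \<longrightarrow> H j" using wit[of v] by blast
    have "i \<noteq> j" using ij(1) irr by blast
    show ?thesis
    proof (cases "i = v")
      case True
      then have "H j" "j \<noteq> v" using ij \<open>i \<noteq> j\<close> by auto
      then show ?thesis using True ij(1) by blast
    next
      case False
      then have Ti: "T i" using ij by blast
      show ?thesis
      proof (cases "j = v")
        case True
        then show ?thesis using Ti ij(1) False by blast
      next
        case False
        then have "H j" using ij by blast
        then show ?thesis using nf Ti ij(1) by blast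
      qed
    qed
  qed
  show False
  proof (cases "T a \<and> T b \<and> T c")
    case True
    have "x0 \<in> {a, b, c}" using U(1) by blast
    then have "T x0" using True by auto
    then have Hx: "H x0" using one by blast
    obtain u where u: "u \<noteq> x0" "((x0, u) \<in> E \<and> H u) \<or> ((u, x0) \<in> E \<and> T u)" using ws[of x0] by blast
    then have "\<exists>i j. (i, j) \<in> E \<and> T i \<and> H j" using \<open>T x0\<close> Hx by blast
    then show False using nf by blast
  next
    case False
    then consider "\<not> T a" | "\<not> T b" | "\<not> T c" by blast
    then show False
    proof cases
      case 1
      have "UNIV = {b, c, a}" using U(1) by (simp add: insert_commute)
      have "\<exists>i j. (i, j) \<in> E \<and> T i \<and> H j"
        by (rule comb_caseB[OF \<open>UNIV = {b, c, a}\<close> _ _ _ tour HT 1 ws]) (use U in auto)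
      then show False using nf by blast
    next
      case 2
      have "UNIV = {a, c, b}" using U(1) by (simp add: insert_commute)
      have "\<exists>i j. (i, j) \<in> E \<and> T i \<and> H j"
        by (rule comb_caseB[OF \<open>UNIV = {a, c, b}\<close> _ _ _ tour HT 2 ws]) (use U in auto)
      then show False using nf by blast
    next
      case 3
      have "\<exists>i j. (i, j) \<in> E \<and> T i \<and> H j"
        by (rule comb_caseB[OF U(1) _ _ _ tour HT 3 ws]) (use U in auto)
      then show False using nf by blast
    qed
  qed
qed

lemma Qv_pow:
  assumes O: "is_orientation C3_graph E" and wpos: "\<forall>x. w x > 0" and xv: "x \<noteq> v"
  shows "(Var x ^ w x :: ('v, 'k::comm_ring_1) mpoly) \<in> MIx (- {v}) (SE E w)"
proof -
  have "(x, v) \<in> E \<or> (v, x) \<in> E" using orientD(2)[OF O xv] by blast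
  then have "\<exists>s\<in>SE E w. mdom (- {v}) s (sg x (w x))"
  proof
    assume e: "(x, v) \<in> E"
    have "mdom (- {v}) (sg x 1 + sg v (w v)) (sg x (w x))"
      using mdom_SE[OF xv] wpos xv by (simp add: Suc_le_eq)
    moreover have "sg x 1 + sg v (w v) \<in> SE E w" unfolding SE_def using e by blast
    ultimately show ?thesis by blast
  next
    assume e: "(v, x) \<in> E"
    have "mdom (- {v}) (sg v 1 + sg x (w x)) (sg x (w x))"
      using mdom_SE[of v x] xv by simp
    moreover have "sg v 1 + sg x (w x) \<in> SE E w" unfolding SE_def using e by blast
    ultimately show ?thesis by blast
  qed
  then show ?thesis by (simp add: Var_pow MIx_single)
qed

lemma sat_Qv:
  fixes g :: "('v, 'k::field) mpoly"
  shows "h \<noteq> 0 \<Longrightarrow> g * psi v h \<in> MIx (- {v}) S \<Longrightarrow> g \<in> MIx (- {v}) S"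
  by (rule sat_MIx) auto

lemma psi_lin: "psi v [:p0, 1:] = sg 0 p0 + (Var v :: ('v, 'k::comm_ring_1) mpoly)"
  by (simp add: psi_pCons)

lemma grade_ge1:
  fixes M :: "('v::finite, 'k::field) mpoly set"
  assumes C: "CARD('v) = 3" and O: "is_orientation C3_graph E" and wpos: "\<forall>x. w x > 0"
    and one: "w x0 = 1" and M: "maximal_ideal M" and IM: "edge_ideal E w \<subseteq> M"
  shows "\<exists>f. f \<in> M \<and> quot_regular_seq (edge_ideal E w) [f]"
proof -
  let ?I = "edge_ideal E w :: ('v, 'k) mpoly set"
  have PM: "prime_ideal M" using maximal_prime[OF M] .
  have iM: "is_ideal M" using maxI[OF M] .
  obtain a b c where U: "UNIV = {a, b, c}" "a \<noteq> b" "a \<noteq> c" "b \<noteq> c" and ab: "Var a \<in> M" "Var b \<in> M"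
    using prime_pair[OF C PM IM O] by blast
  let ?P = "ideal_gen {Var a, Var b} :: ('v, 'k) mpoly set"
  have PsM: "?P \<subseteq> M" using ab by (intro ideal_gen_least[OF iM]) auto
  have "M \<noteq> ?P" using Pab_not_max[OF U(3) U(4) M] .
  then obtain f where f: "f \<in> M" "f \<notin> ?P" using PsM by blast
  obtain f' p where d: "f = f' + psi c p" "f' \<in> ?P" using dec[OF U(1)] by blast
  have pM: "psi c p \<in> M"
  proof -
    have "psi c p = f - f'" using d by simp
    also have "\<dots> \<in> M" using ideal_diff[OF iM f(1)] d(2) PsM by blast
    finally show ?thesis .
  qed
  have p0: "p \<noteq> 0" using d f by auto
  obtain p0 q where pq: "p = pCons p0 q" by (cases p) auto
  have psic: "psi c p = sg 0 p0 + Var c * psi c q" using pq by (simp add: psi_pCons)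
  define f0 where "f0 = Var a + Var b + psi c p"
  have f0M: "f0 \<in> M" unfolding f0_def using ab pM iM by (intro ideal_add) auto
  have key: "g \<in> ?I" if gf: "g * f0 \<in> ?I" for g
  proof -
    have Isub: "?I \<subseteq> MIx (- {v}) (SE E w)" for v
      using MIx_mono_X[of "- {v}" UNIV "SE E w"] I_MIx[of E w] by auto
    have iQ: "is_ideal (MIx (- {v}) (SE E w) :: ('v, 'k) mpoly set)" for v by (rule MIx_ideal)
    have gc: "g \<in> MIx (- {c}) (SE E w)"
    proof (rule reg[OF iQ sat_Qv p0])
      have A: "(Var a ^ w a :: ('v, 'k) mpoly) \<in> MIx (- {c}) (SE E w)" by (rule Qv_pow[OF O wpos]) (use U in auto)
      have B: "(Var b ^ w b :: ('v, 'k) mpoly) \<in> MIx (- {c}) (SE E w)" by (rule Qv_pow[OF O wpos]) (use U in auto)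
      show "((Var a * 1 + Var b * 1) :: ('v, 'k) mpoly) ^ (w a + w b) \<in> MIx (- {c}) (SE E w)"
        by (rule nil_pow[OF iQ A B])
      have "f0 = psi c p + (Var a * 1 + Var b * 1)" unfolding f0_def by (simp add: algebra_simps)
      then show "g * (psi c p + (Var a * 1 + Var b * 1)) \<in> MIx (- {c}) (SE E w)" using gf Isub by auto
    qed
    have lin0: "[:p0, 1:] \<noteq> 0" by simp
    have satv: "\<And>(g' :: ('v, 'k) mpoly) h'. h' \<noteq> 0 \<Longrightarrow> g' * psi v h' \<in> MIx (- {v}) (SE E w) \<Longrightarrow> g' \<in> MIx (- {v}) (SE E w)" for v
      by (rule sat_Qv)
    have gb: "g \<in> MIx (- {b}) (SE E w)"
    proof (rule reg[OF iQ satv lin0])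
      have A: "(Var a ^ w a :: ('v, 'k) mpoly) \<in> MIx (- {b}) (SE E w)" by (rule Qv_pow[OF O wpos]) (use U in auto)
      have B: "(Var c ^ w c :: ('v, 'k) mpoly) \<in> MIx (- {b}) (SE E w)" by (rule Qv_pow[OF O wpos]) (use U in auto)
      show "((Var a * 1 + Var c * psi c q) :: ('v, 'k) mpoly) ^ (w a + w c) \<in> MIx (- {b}) (SE E w)"
        by (rule nil_pow[OF iQ A B])
      have "f0 = psi b [:p0, 1:] + (Var a * 1 + Var c * psi c q)" unfolding f0_def psi_lin psic
        by (simp add: algebra_simps)
      then show "g * (psi b [:p0, 1:] + (Var a * 1 + Var c * psi c q)) \<in> MIx (- {b}) (SE E w)" using gf Isub by auto
    qed
    have ga: "g \<in> MIx (- {a}) (SE E w)"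
    proof (rule reg[OF iQ satv lin0])
      have A: "(Var b ^ w b :: ('v, 'k) mpoly) \<in> MIx (- {a}) (SE E w)" by (rule Qv_pow[OF O wpos]) (use U in auto)
      have B: "(Var c ^ w c :: ('v, 'k) mpoly) \<in> MIx (- {a}) (SE E w)" by (rule Qv_pow[OF O wpos]) (use U in auto)
      show "((Var b * 1 + Var c * psi c q) :: ('v, 'k) mpoly) ^ (w b + w c) \<in> MIx (- {a}) (SE E w)"
        by (rule nil_pow[OF iQ A B])
      have "f0 = psi a [:p0, 1:] + (Var b * 1 + Var c * psi c q)" unfolding f0_def psi_lin psic
        by (simp add: algebra_simps)
      then show "g * (psi a [:p0, 1:] + (Var b * 1 + Var c * psi c q)) \<in> MIx (- {a}) (SE E w)" using gf Isub by auto
    qed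
    have gall: "g \<in> MIx (- {v}) (SE E w)" for v
    proof -
      have "v = a \<or> v = b \<or> v = c" using U(1) by blast
      then show ?thesis using ga gb gc by blast
    qed
    have "g \<in> MIx UNIV (SE E w)" unfolding MIx_iff
    proof
      fix m assume m: "m \<in> ks g"
      have wit: "\<exists>i j. (i, j) \<in> E \<and> (i \<noteq> v \<longrightarrow> 1 \<le> lk m i) \<and> (j \<noteq> v \<longrightarrow> w j \<le> lk m j)" for v
      proof -
        obtain s where s: "s \<in> SE E w" "mdom (- {v}) s m" using gall[of v] m unfolding MIx_iff by blast
        then obtain i j where ij: "(i, j) \<in> E" "s = sg i 1 + sg j (w j)" unfolding SE_def by blast
        have "i \<noteq> j" using orientD(1)[OF O ij(1)] .
        then show ?thesis using s(2) ij mdom_SE[of i j "- {v}" "w j" m] by auto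
      qed
      have "\<exists>i j. (i, j) \<in> E \<and> 1 \<le> lk m i \<and> w j \<le> lk m j"
      proof (rule comb[OF U, where T = "\<lambda>i. 1 \<le> lk m i" and H = "\<lambda>j. w j \<le> lk m j"])
        show "(p, p) \<notin> E" for p using orientD(1)[OF O, of p p] by blast
        show "(p, q) \<in> E \<longleftrightarrow> (q, p) \<notin> E" if "p \<noteq> q" for p q by (rule orientD(2)[OF O that])
        show "1 \<le> lk m v" if "w v \<le> lk m v" for v
        proof -
          have "1 \<le> w v" using wpos by (simp add: Suc_le_eq)
          then show ?thesis using that by linarith
        qed
        show "1 \<le> lk m x0 \<Longrightarrow> w x0 \<le> lk m x0" using one by simp
        show "\<And>v. \<exists>i j. (i, j) \<in> E \<and> (i \<noteq> v \<longrightarrow> 1 \<le> lk m i) \<and> (j \<noteq> v \<longrightarrow> w j \<le> lk m j)" by (rule wit)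
      qed
      then obtain i j where ij: "(i, j) \<in> E" "1 \<le> lk m i" "w j \<le> lk m j" by blast
      have "i \<noteq> j" using orientD(1)[OF O ij(1)] .
      then have "mdom UNIV (sg i 1 + sg j (w j)) m" using mdom_SE[of i j UNIV "w j" m] ij by simp
      moreover have "sg i 1 + sg j (w j) \<in> SE E w" unfolding SE_def using ij(1) by blast
      ultimately show "\<exists>s\<in>SE E w. mdom UNIV s m" by blast
    qed
    then show ?thesis by (simp add: I_MIx)
  qed
  have "quot_regular_seq ?I [f0]"
    unfolding quot_regular_seq_def
  proof (intro conjI allI impI)
    fix k g assume k: "k < length [f0]" and g: "g * [f0] ! k \<in> ideal_gen (?I \<union> set (take k [f0]))"
    have k0: "k = 0" using k by simp
    have "g * f0 \<in> ?I" using g unfolding k0 by (simp add: ideal_gen_idem[OF edge_ideal_ideal])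
    then have "g \<in> ?I" by (rule key)
    then show "g \<in> ideal_gen (?I \<union> set (take k [f0]))" unfolding k0 by (simp add: ideal_gen_idem[OF edge_ideal_ideal])
  next
    have "ideal_gen (?I \<union> set [f0]) \<subseteq> M" using IM f0M by (intro ideal_gen_least[OF iM]) auto
    then show "ideal_gen (?I \<union> set [f0]) \<noteq> UNIV" using maxU[OF M] by auto
  qed
  then show ?thesis using f0M by blast
qed

lemma grade_one:
  fixes M :: "('v::finite, 'k::field) mpoly set"
  assumes C: "CARD('v) = 3" and O: "is_orientation C3_graph E" and wpos: "\<forall>x. w x > 0"
    and one: "w x0 = 1" and M: "maximal_ideal M" and IM: "edge_ideal E w \<subseteq> M"
  shows "quot_grade (edge_ideal E w) M = 1"
proof -
  let ?I = "edge_ideal E w :: ('v, 'k) mpoly set"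
  let ?A = "{enat (length fs) | fs. set fs \<subseteq> M \<and> quot_regular_seq ?I fs}"
  obtain f where f: "f \<in> M" "quot_regular_seq ?I [f]" using grade_ge1[OF C O wpos one M IM] by blast
  have "\<exists>fs. enat 1 = enat (length fs) \<and> set fs \<subseteq> M \<and> quot_regular_seq ?I fs"
    using f by (intro exI[of _ "[f]"]) simp
  then have A1: "enat 1 \<in> ?A" by (simp only: mem_Collect_eq)
  have A2: "x \<le> enat 1" if "x \<in> ?A" for x
  proof -
    have "\<exists>fs. x = enat (length fs) \<and> set fs \<subseteq> M \<and> quot_regular_seq ?I fs" using that by (simp only: mem_Collect_eq)
    then obtain fs where fs: "x = enat (length fs)" "set fs \<subseteq> M" "quot_regular_seq ?I fs" by blast
    have "length fs \<le> 1" by (rule grade_le1[OF C O M IM fs(2) fs(3)])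
    then show ?thesis using fs(1) by simp
  qed
  have "Sup ?A \<le> enat 1" by (rule Sup_least) (rule A2)
  moreover have "enat 1 \<le> Sup ?A" by (rule Sup_upper[OF A1])
  ultimately have "Sup ?A = enat 1" by (rule antisym)
  then show ?thesis unfolding quot_grade_def by (simp add: one_enat_def)
qed

lemma CM_if:
  fixes E :: "('v::finite \<times> 'v) set"
  assumes C: "CARD('v) = 3" and O: "is_orientation C3_graph E" and wpos: "\<forall>x. w x > 0"
    and one: "w x0 = 1"
  shows "cohen_macaulay_quot (edge_ideal E w :: ('v, 'k::field) mpoly set)"
  unfolding cohen_macaulay_quot_def
proof (intro allI impI)
  fix M :: "('v, 'k) mpoly set"
  assume "maximal_ideal M \<and> edge_ideal E w \<subseteq> M"
  then have M: "maximal_ideal M" and IM: "edge_ideal E w \<subseteq> M" by auto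
  show "quot_grade (edge_ideal E w) M = quot_height (edge_ideal E w) M"
    using grade_one[OF C O wpos one M IM] height_one[OF C O wpos M IM] by simp
qed

lemma lookup_u: "lk (Abs_poly_mapping (\<lambda>v::'v::finite. f v - (1::nat))) v = f v - 1"
proof -
  have "finite {v::'v. f v - 1 \<noteq> 0}" by simp
  then show ?thesis by simp
qed

lemma socle_grade0:
  fixes fs :: "('v::finite, 'k::field) mpoly list"
  assumes O: "is_orientation C3_graph E" and wpos: "\<forall>x. w x > 0"
    and src: "\<forall>x. is_source C3_graph E x \<longrightarrow> w x = 1" and nw: "\<forall>x. w x \<noteq> 1"
    and fs: "set fs \<subseteq> MZ" "quot_regular_seq (edge_ideal E w) fs"
  shows "length fs = 0"
proof (rule ccontr)
  assume "length fs \<noteq> 0"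
  then have ne: "fs \<noteq> []" by simp
  let ?I = "edge_ideal E w :: ('v, 'k) mpoly set"
  have iI: "is_ideal ?I" by (rule edge_ideal_ideal)
  have reg: "\<And>k g. k < length fs \<Longrightarrow> g * fs ! k \<in> ideal_gen (?I \<union> set (take k fs)) \<Longrightarrow> g \<in> ideal_gen (?I \<union> set (take k fs))"
    using fs(2) unfolding quot_regular_seq_def by blast
  have reg0: "\<And>g. g * fs ! 0 \<in> ?I \<Longrightarrow> g \<in> ?I"
    using reg[of 0] ne by (simp add: ideal_gen_idem[OF iI])
  have "fs ! 0 \<in> set fs" using ne by simp
  then have f0: "fs ! 0 \<in> MZ" using fs(1) by blast
  define u :: "'v \<Rightarrow>\<^sub>0 nat" where "u = Abs_poly_mapping (\<lambda>v. w v - 1)"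
  have lu: "lk u v = w v - 1" for v unfolding u_def by (rule lookup_u)
  have w2: "w v \<ge> 2" for v
  proof -
    have "w v > 0" using wpos by blast
    moreover have "w v \<noteq> 1" using nw by blast
    ultimately show ?thesis by linarith
  qed
  have notin: "(sg u 1 :: ('v, 'k) mpoly) \<notin> ?I"
  proof
    assume "(sg u 1 :: ('v, 'k) mpoly) \<in> ?I"
    then obtain s where s: "s \<in> SE E w" "mdom UNIV s u" by (auto simp: I_MIx MIx_single)
    then obtain i j where ij: "(i, j) \<in> E" "s = sg i 1 + sg j (w j)" unfolding SE_def by blast
    have "i \<noteq> j" using orientD(1)[OF O ij(1)] .
    then have "w j \<le> lk u j" using s(2) ij(2) mdom_SE[of i j UNIV "w j" u] by simp
    moreover have "w j > 0" using wpos by blast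
    ultimately show False using lu[of j] by linarith
  qed
  have "(sg u 1 :: ('v, 'k) mpoly) * fs ! 0 \<in> ?I"
  proof -
    have "\<exists>s\<in>SE E w. mdom UNIV s m" if m: "m \<in> ks ((sg u 1 :: ('v, 'k) mpoly) * fs ! 0)" for m
    proof -
      obtain a' b' where ab: "m = a' + b'" "a' \<in> ks (sg u (1::'k))" "b' \<in> ks (fs ! 0)"
        using keys_mult[of "sg u (1::'k)" "fs ! 0"] m by blast
      have a': "a' = u" using ab(2) by simp
      obtain v where v: "mdom UNIV (sg v 1) b'" using f0 ab(3) unfolding MZ_def MIx_iff by blast
      have bv: "1 \<le> lk b' v" using v by (simp add: mdom_sg)
      have "\<not> is_source C3_graph E v" using src nw by blast
      then obtain y where y: "C3_graph v y" "(v, y) \<notin> E" unfolding is_source_def by blast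
      have yv: "y \<noteq> v" using y(1) unfolding C3_graph_def by simp
      have e: "(y, v) \<in> E" using orientD(2)[OF O yv] y(2) by blast
      have "mdom UNIV (sg y 1 + sg v (w v)) m"
      proof -
        have "1 \<le> lk m y" using w2[of y] lu[of y] ab(1) a' by (simp add: lookup_add)
        moreover have "w v \<le> lk m v" using bv lu[of v] ab(1) a' w2[of v] by (simp add: lookup_add)
        ultimately show ?thesis using mdom_SE[OF yv, of UNIV "w v" m] by simp
      qed
      moreover have "sg y 1 + sg v (w v) \<in> SE E w" unfolding SE_def using e by blast
      ultimately show ?thesis by blast
    qed
    then show ?thesis by (simp add: I_MIx MIx_iff)
  qed
  then have "(sg u 1 :: ('v, 'k) mpoly) \<in> ?I" by (rule reg0)
  then show False using notin by simp
qed

lemma not_CM: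
  fixes E :: "('v::finite \<times> 'v) set"
  assumes C: "CARD('v) = 3" and O: "is_orientation C3_graph E" and wpos: "\<forall>x. w x > 0"
    and src: "\<forall>x. is_source C3_graph E x \<longrightarrow> w x = 1" and nw: "\<forall>x. w x \<noteq> 1"
  shows "\<not> cohen_macaulay_quot (edge_ideal E w :: ('v, 'k::field) mpoly set)"
proof
  let ?I = "edge_ideal E w :: ('v, 'k) mpoly set"
  let ?M = "MZ :: ('v, 'k) mpoly set"
  assume CM: "cohen_macaulay_quot ?I"
  obtain a b c :: 'v where U: "UNIV = {a, b, c}" "a \<noteq> b" "a \<noteq> c" "b \<noteq> c" using three[OF C] by blast
  have M: "maximal_ideal ?M" by (rule MZ_maximal)
  have IM: "?I \<subseteq> ?M" using I_sub_Pab[OF O wpos U(1)] Pab_sub_MZ[of a b] by blast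
  have h: "quot_height ?I ?M = 1" by (rule height_one[OF C O wpos M IM])
  have "quot_grade ?I ?M \<le> 0" unfolding quot_grade_def
  proof (rule Sup_least)
    fix x assume "x \<in> {enat (length fs) | fs. set fs \<subseteq> ?M \<and> quot_regular_seq ?I fs}"
    then have "\<exists>fs. x = enat (length fs) \<and> set fs \<subseteq> ?M \<and> quot_regular_seq ?I fs" by (simp only: mem_Collect_eq)
    then obtain fs where fs: "x = enat (length fs)" "set fs \<subseteq> ?M" "quot_regular_seq ?I fs" by blast
    have "length fs = 0" by (rule socle_grade0[OF O wpos src nw fs(2) fs(3)])
    then show "x \<le> 0" using fs(1) by (simp add: zero_enat_def)
  qed
  moreover have "quot_grade ?I ?M = quot_height ?I ?M" using CM M IM unfolding cohen_macaulay_quot_def by blast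
  ultimately show False using h by simp
qed

theorem theorem4p3:
  fixes E :: "('v::finite \<times> 'v) set" and w :: "'v \<Rightarrow> nat"
  assumes "CARD('v) = 3"
    and "is_orientation C3_graph E"
    and "\<forall>x. w x > 0"
    and "\<forall>x. is_source C3_graph E x \<longrightarrow> w x = 1"
  shows "cohen_macaulay_quot (edge_ideal E w :: ('v, 'k::field) mpoly set)
           \<longleftrightarrow> (\<exists>x. w x = 1)"
proof
  assume "cohen_macaulay_quot (edge_ideal E w :: ('v, 'k::field) mpoly set)"
  then show "\<exists>x. w x = 1" using not_CM[OF assms] by blast
next
  assume "\<exists>x. w x = 1"
  then obtain x0 where "w x0 = 1" by blast
  then show "cohen_macaulay_quot (edge_ideal E w :: ('v, 'k::field) mpoly set)"
    by (rule CM_if[OF assms(1-3)])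
qed

end
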